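(* Let $A\in\mathbb{R}^{n\times n}$ and $\alpha>0$ be given, and consider the linear system $\dot x=Ax$, $x\in\mathbb{R}^n$. The system is stable if there exists a symmetric positive definite matrix $P\in\mathbb{R}^{n\times n}$ such that at least one of the following conditions holds: 1) for some $\beta\ge1$ with either $\beta=1$, or $\beta>1$ and $\mathrm{trace}(A)\le0$: $A^{\rm T}P+PA-\frac{1}{\alpha}\frac{\beta-1}{\beta+1}\mathrm{trace}(A)P<0$; 2) $A^{\rm T}P+PA-\frac{1}{\alpha}\mathrm{trace}(A)P<0$ and $A^{\rm T}P+PA+\frac{1}{\alpha}\mathrm{trace}(A)P<0$.
   Context: Matrix inequalities $M<0$ mean that the symmetric matrix $M$ is negative definite. Stability is in the sense of Lyapunov. *)

theory Defs
  imports "HOL-Analysis.Analysis"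
begin

definition symmetric_mat :: "real^'n^'n \<Rightarrow> bool" where
  "symmetric_mat M \<longleftrightarrow> transpose M = M"

definition pos_def :: "real^'n^'n \<Rightarrow> bool" where
  "pos_def M \<longleftrightarrow> symmetric_mat M \<and> (\<forall>x. x \<noteq> 0 \<longrightarrow> x \<bullet> (M *v x) > 0)"

definition neg_def :: "real^'n^'n \<Rightarrow> bool" where
  "neg_def M \<longleftrightarrow> symmetric_mat M \<and> (\<forall>x. x \<noteq> 0 \<longrightarrow> x \<bullet> (M *v x) < 0)"

definition lyapunov_stable :: "real^'n^'n \<Rightarrow> bool" where
  "lyapunov_stable A \<longleftrightarrow>
     (\<forall>\<epsilon>>0. \<exists>\<delta>>0. \<forall>x :: real \<Rightarrow> real^'n.
        (\<forall>t\<ge>0. (x has_vector_derivative (A *v x t)) (at t within {0..})) \<and> norm (x 0) < \<delta>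
        \<longrightarrow> (\<forall>t\<ge>0. norm (x t) < \<epsilon>))"

end

theory Submission
  imports Defs
begin

lemma quad_form_AP:
  fixes A P :: "real^'n^'n"
  shows "(A *v y) \<bullet> (P *v y) + y \<bullet> (P *v (A *v y)) = y \<bullet> ((transpose A ** P + P ** A) *v y)"
proof -
  have "(A *v y) \<bullet> (P *v y) = y \<bullet> ((transpose A ** P) *v y)"
    by (metis dot_lmul_matrix vector_transpose_matrix matrix_vector_mul_assoc)
  moreover have "y \<bullet> (P *v (A *v y)) = y \<bullet> ((P ** A) *v y)"
    by (simp add: matrix_vector_mul_assoc)
  ultimately show ?thesis
    by (simp add: matrix_vector_mult_add_rdistrib inner_add_right)
qed

lemma lyap_stable_core:
  fixes A P :: "real^'n^'n"
  assumes pd: "pos_def P"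
    and neg: "\<And>y. y \<bullet> ((transpose A ** P + P ** A) *v y) \<le> 0"
  shows "lyapunov_stable A"
proof -
  define V where "V y = y \<bullet> (P *v y)" for y :: "real^'n"
  have Vpos: "y \<noteq> 0 \<Longrightarrow> V y > 0" for y using pd unfolding pos_def_def V_def by auto
  obtain K where K: "K > 0" "\<And>y. norm (P *v y) \<le> norm y * K"
    using bounded_linear.pos_bounded[OF matrix_vector_mul_bounded_linear[of P]] by blast
  have Vup: "V y \<le> K * (norm y)^2" for y
  proof -
    have "V y \<le> norm y * norm (P *v y)" unfolding V_def by (rule norm_cauchy_schwarz)
    also have "\<dots> \<le> norm y * (norm y * K)" using K(2) by (simp add: mult_left_mono)
    finally show ?thesis by (simp add: power2_eq_square algebra_simps)
  qed
  have cont: "continuous_on (sphere (0::real^'n) 1) V"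
    unfolding V_def by (intro continuous_intros)
  obtain z where z: "z \<in> sphere (0::real^'n) 1" "\<And>y. y \<in> sphere 0 1 \<Longrightarrow> V z \<le> V y"
    using continuous_attains_inf[OF compact_sphere _ cont] by auto
  define m where "m = V z"
  have m: "m > 0" unfolding m_def using z(1) by (intro Vpos) auto
  have Vlow: "m * (norm y)^2 \<le> V y" for y
  proof (cases "y = 0")
    case True then show ?thesis by (simp add: V_def)
  next
    case False
    define u where "u = (1 / norm y) *\<^sub>R y"
    have u: "u \<in> sphere 0 1" using False by (simp add: u_def)
    have yu: "y = norm y *\<^sub>R u" using False by (simp add: u_def)
    have "V y = (norm y)^2 * V u"
      by (subst yu) (simp add: V_def matrix_vector_mult_scaleR power2_eq_square)
    then show ?thesis using z(2)[OF u] unfolding m_def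
      by (simp add: mult.commute mult_right_mono)
  qed
  show ?thesis unfolding lyapunov_stable_def
  proof (intro allI impI)
    fix \<epsilon> :: real assume e: "\<epsilon> > 0"
    define \<delta> where "\<delta> = min \<epsilon> (\<epsilon> * m / K)"
    have d: "\<delta> > 0" using e m K by (simp add: \<delta>_def)
    have dsq: "K * \<delta>^2 \<le> m * \<epsilon>^2"
    proof -
      have "\<delta> * \<delta> \<le> \<epsilon> * (\<epsilon> * m / K)"
        using d e m K by (intro mult_mono) (auto simp: \<delta>_def)
      then have "K * (\<delta> * \<delta>) \<le> K * (\<epsilon> * (\<epsilon> * m / K))" by (rule mult_left_mono[OF _ less_imp_le[OF K(1)]])
      also have "\<dots> = m * (\<epsilon> * \<epsilon>)" using K(1) by simp
      finally show ?thesis by (simp add: power2_eq_square)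
    qed
    show "\<exists>\<delta>>0. \<forall>x :: real \<Rightarrow> real^'n.
        (\<forall>t\<ge>0. (x has_vector_derivative (A *v x t)) (at t within {0..})) \<and> norm (x 0) < \<delta>
        \<longrightarrow> (\<forall>t\<ge>0. norm (x t) < \<epsilon>)"
    proof (intro exI[of _ \<delta>] conjI allI impI d)
      fix x :: "real \<Rightarrow> real^'n" and t :: real
      assume H: "(\<forall>t\<ge>0. (x has_vector_derivative (A *v x t)) (at t within {0..})) \<and> norm (x 0) < \<delta>"
        and t: "t \<ge> 0"
      have der: "((\<lambda>s. V (x s)) has_derivative
          (\<lambda>h. x s \<bullet> (P *v (h *\<^sub>R (A *v x s))) + (h *\<^sub>R (A *v x s)) \<bullet> (P *v x s))) (at s within {0..t})"
        if "0 \<le> s" "s \<le> t" for s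
      proof -
        have xd: "(x has_derivative (\<lambda>h. h *\<^sub>R (A *v x s))) (at s within {0..t})"
          using H that has_derivative_subset[of x _ s "{0..}" "{0..t}"]
          unfolding has_vector_derivative_def by auto
        have Pd: "((\<lambda>s. P *v x s) has_derivative (\<lambda>h. P *v (h *\<^sub>R (A *v x s)))) (at s within {0..t})"
          using bounded_linear.has_derivative[OF matrix_vector_mul_bounded_linear[of P] xd] .
        show ?thesis unfolding V_def
          using has_derivative_inner[OF xd Pd] .
      qed
      have "\<exists>s\<in>{0..t}. V (x t) - V (x 0) =
          x s \<bullet> (P *v ((t - 0) *\<^sub>R (A *v x s))) + ((t - 0) *\<^sub>R (A *v x s)) \<bullet> (P *v x s)"
        by (rule mvt_very_simple[OF t der])
      then obtain s where s: "s \<in> {0..t}" and eq: "V (x t) - V (x 0) =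
          x s \<bullet> (P *v ((t - 0) *\<^sub>R (A *v x s))) + ((t - 0) *\<^sub>R (A *v x s)) \<bullet> (P *v x s)"
        by (elim bexE)
      have "x s \<bullet> (P *v ((t - 0) *\<^sub>R (A *v x s))) + ((t - 0) *\<^sub>R (A *v x s)) \<bullet> (P *v x s)
           = t * ((A *v x s) \<bullet> (P *v x s) + x s \<bullet> (P *v (A *v x s)))"
        by (simp add: matrix_vector_mult_scaleR algebra_simps)
      also have "\<dots> \<le> 0" unfolding quad_form_AP using t neg[of "x s"]
        by (simp add: mult_nonneg_nonpos)
      finally have mono: "V (x t) \<le> V (x 0)" using eq by linarith
      have "m * (norm (x t))^2 \<le> V (x t)" by (rule Vlow)
      also have "\<dots> \<le> V (x 0)" by (rule mono)
      also have "\<dots> \<le> K * (norm (x 0))^2" by (rule Vup)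
      also have "\<dots> < K * \<delta>^2"
        using H K by (intro mult_strict_left_mono power_strict_mono) auto
      also have "\<dots> \<le> m * \<epsilon>^2" by (rule dsq)
      finally have "(norm (x t))^2 < \<epsilon>^2" using m by simp
      then show "norm (x t) < \<epsilon>" using e by (simp add: power_less_imp_less_base)
    qed
  qed
qed

theorem theorem2p4:
  fixes A :: "real^'n^'n" and \<alpha> :: real
  assumes "\<alpha> > 0"
    and "\<exists>P. pos_def P \<and>
          ((\<exists>\<beta>::real. \<beta> \<ge> 1 \<and> (\<beta> = 1 \<or> (\<beta> > 1 \<and> trace A \<le> 0)) \<and>
              neg_def (transpose A ** P + P ** A
                       - ((1 / \<alpha>) * ((\<beta> - 1) / (\<beta> + 1)) * trace A) *\<^sub>R P))
           \<or> (neg_def (transpose A ** P + P ** A - ((1 / \<alpha>) * trace A) *\<^sub>R P) \<and>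
              neg_def (transpose A ** P + P ** A + ((1 / \<alpha>) * trace A) *\<^sub>R P)))"
  shows "lyapunov_stable A"
proof -
  obtain P where pd: "pos_def P" and C: "((\<exists>\<beta>::real. \<beta> \<ge> 1 \<and> (\<beta> = 1 \<or> (\<beta> > 1 \<and> trace A \<le> 0)) \<and>
              neg_def (transpose A ** P + P ** A
                       - ((1 / \<alpha>) * ((\<beta> - 1) / (\<beta> + 1)) * trace A) *\<^sub>R P))
           \<or> (neg_def (transpose A ** P + P ** A - ((1 / \<alpha>) * trace A) *\<^sub>R P) \<and>
              neg_def (transpose A ** P + P ** A + ((1 / \<alpha>) * trace A) *\<^sub>R P)))"
    using assms(2) by blast
  define Q where "Q = transpose A ** P + P ** A"
  have Ppos: "0 \<le> y \<bullet> (P *v y)" for y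
    using pd unfolding pos_def_def by (cases "y = 0") (auto intro: less_imp_le)
  have expand: "y \<bullet> ((Q + c *\<^sub>R P) *v y) = y \<bullet> (Q *v y) + c * (y \<bullet> (P *v y))"
    "y \<bullet> ((Q - c *\<^sub>R P) *v y) = y \<bullet> (Q *v y) - c * (y \<bullet> (P *v y))" for y c
    by (simp_all add: matrix_vector_mult_add_rdistrib matrix_vector_mult_diff_rdistrib
        inner_add_right inner_diff_right scaleR_matrix_vector_assoc[symmetric])
  have neg: "y \<bullet> (Q *v y) \<le> 0" for y
  proof (cases "y = 0")
    case True then show ?thesis by simp
  next
    case False
    from C show ?thesis
    proof
      assume "\<exists>\<beta>::real. \<beta> \<ge> 1 \<and> (\<beta> = 1 \<or> (\<beta> > 1 \<and> trace A \<le> 0)) \<and>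
              neg_def (transpose A ** P + P ** A
                       - ((1 / \<alpha>) * ((\<beta> - 1) / (\<beta> + 1)) * trace A) *\<^sub>R P)"
      then obtain \<beta> :: real where b: "\<beta> \<ge> 1" "\<beta> = 1 \<or> (\<beta> > 1 \<and> trace A \<le> 0)"
        and nd: "neg_def (Q - ((1 / \<alpha>) * ((\<beta> - 1) / (\<beta> + 1)) * trace A) *\<^sub>R P)"
        unfolding Q_def by blast
      define c where "c = (1 / \<alpha>) * ((\<beta> - 1) / (\<beta> + 1)) * trace A"
      have c: "c \<le> 0"
        using b(2)
      proof
        assume "\<beta> = 1" then show ?thesis by (simp add: c_def)
      next
        assume h: "\<beta> > 1 \<and> trace A \<le> 0"
        have "0 \<le> (1 / \<alpha>) * ((\<beta> - 1) / (\<beta> + 1))" using assms(1) h by simp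
        then show ?thesis unfolding c_def using h by (intro mult_nonneg_nonpos) auto
      qed
      have "y \<bullet> (Q *v y) - c * (y \<bullet> (P *v y)) < 0"
        using nd False unfolding neg_def_def c_def[symmetric] expand by auto
      moreover have "c * (y \<bullet> (P *v y)) \<le> 0" using c Ppos[of y] by (simp add: mult_nonpos_nonneg)
      ultimately show ?thesis by linarith
    next
      assume h: "neg_def (transpose A ** P + P ** A - ((1 / \<alpha>) * trace A) *\<^sub>R P) \<and>
              neg_def (transpose A ** P + P ** A + ((1 / \<alpha>) * trace A) *\<^sub>R P)"
      then have "y \<bullet> (Q *v y) - ((1 / \<alpha>) * trace A) * (y \<bullet> (P *v y)) < 0"
        "y \<bullet> (Q *v y) + ((1 / \<alpha>) * trace A) * (y \<bullet> (P *v y)) < 0"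
        using False unfolding neg_def_def Q_def[symmetric] expand by auto
      then show ?thesis by linarith
    qed
  qed
  show ?thesis
    by (rule lyap_stable_core[OF pd]) (use neg in \<open>simp add: Q_def\<close>)
qed

end
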